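(* Let $\omega>0$ and consider two qubits with $H_{\rm Ant}=\omega\sum_{j=1}^3\sigma^j\otimes\sigma^j$. Let $W_p=(1-p)\frac{\mathbb 1}{4}+p\ket{\psi}\bra{\psi}$ with $p\in[0,1]$ and $\ket\psi$ any of the four Bell states $\frac{1}{\sqrt2}(\ket{00}\pm\ket{11})$, $\frac{1}{\sqrt2}(\ket{01}\pm\ket{10})$. Then $\mathcal C_{\rm P}^1(H_{\rm Ant})=2\omega$, $\max_\rho\mathcal C_{\rm P}(\rho,H_{\rm Ant})=\|H_{\rm Ant}\|_\infty=4\omega$, and $\mathcal C_{\rm P}(W_p,H_{\rm Ant})=4p\omega$. Consequently $\mathcal C_{\rm P}(W_p,H_{\rm Ant})>\mathcal C_{\rm P}^1(H_{\rm Ant})$ if and only if $p>1/2$.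
   Context: $\sigma^1,\sigma^2,\sigma^3$ are the Pauli matrices. For a two-qubit density operator $\rho$, the parallel capacity is $\mathcal C_{\rm P}(\rho,H):=\max_{U_a,U_b}\mathrm{tr}[(U_a\otimes U_b)\rho(U_a\otimes U_b)^\dagger H]-\min_{U_a,U_b}\mathrm{tr}[(U_a\otimes U_b)\rho(U_a\otimes U_b)^\dagger H]$ over single-qubit unitaries $U_a,U_b$; $\mathcal C_{\rm P}^1(H):=\max_{\rho\text{ separable}}\mathcal C_{\rm P}(\rho,H)$; $\|H\|_\infty$ is the difference between largest and smallest eigenvalues of $H$. *)

theory Defs
  imports "HOL-Analysis.Analysis" "HOL-Library.Numeral_Type"
begin

text \<open>Single-qubit operators: complex 2x2 matrices indexed by type 2 (basis 0,1).
 Two-qubit operators: complex matrices indexed by 2 \<times> 2, basis vector (a,b) = |ab>.\<close>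

type_synonym qop = "complex^2^2"
type_synonym qqop = "complex^(2\<times>2)^(2\<times>2)"
type_synonym qqvec = "complex^(2\<times>2)"

definition sigma1 :: qop where
  "sigma1 = (\<chi> i j. if i \<noteq> j then 1 else 0)"

definition sigma2 :: qop where
  "sigma2 = (\<chi> i j. if i = 0 \<and> j = 1 then - \<i> else if i = 1 \<and> j = 0 then \<i> else 0)"

definition sigma3 :: qop where
  "sigma3 = (\<chi> i j. if i = j then (if i = 0 then 1 else -1) else 0)"

definition kron :: "complex^'a^'a \<Rightarrow> complex^'b^'b \<Rightarrow> complex^('a\<times>'b)^('a\<times>'b)" where
  "kron A B = (\<chi> x y. A$(fst x)$(fst y) * B$(snd x)$(snd y))"

definition adj :: "complex^'n^'n \<Rightarrow> complex^'n^'n" where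
  "adj A = (\<chi> i j. cnj (A$j$i))"

definition unitary :: "complex^'n^'n \<Rightarrow> bool" where
  "unitary U \<longleftrightarrow> U ** adj U = mat 1 \<and> adj U ** U = mat 1"

definition tr :: "complex^'n^'n \<Rightarrow> complex" where
  "tr A = (\<Sum>i\<in>UNIV. A$i$i)"

definition density_op :: "complex^'n^'n \<Rightarrow> bool" where
  "density_op \<rho> \<longleftrightarrow> adj \<rho> = \<rho>
     \<and> (\<forall>v. 0 \<le> Re (\<Sum>i\<in>UNIV. cnj (v$i) * (\<rho> *v v)$i))
     \<and> tr \<rho> = 1"

definition separable :: "qqop \<Rightarrow> bool" where
  "separable \<rho> \<longleftrightarrow> (\<exists>(n::nat) (q::nat \<Rightarrow> real) (ra::nat \<Rightarrow> qop) (rb::nat \<Rightarrow> qop).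
      (\<forall>k<n. 0 \<le> q k \<and> density_op (ra k) \<and> density_op (rb k))
      \<and> (\<Sum>k<n. q k) = 1
      \<and> \<rho> = (\<Sum>k<n. q k *\<^sub>R kron (ra k) (rb k)))"

text \<open>Energy tr[(Ua \<otimes> Ub) rho (Ua \<otimes> Ub)^dagger H] (real for Hermitian rho, H).\<close>
definition energy :: "qqop \<Rightarrow> qqop \<Rightarrow> qop \<Rightarrow> qop \<Rightarrow> real" where
  "energy \<rho> H Ua Ub = Re (tr (kron Ua Ub ** \<rho> ** adj (kron Ua Ub) ** H))"

definition energies :: "qqop \<Rightarrow> qqop \<Rightarrow> real set" where
  "energies \<rho> H = {energy \<rho> H Ua Ub | Ua Ub. unitary Ua \<and> unitary Ub}"

definition CP :: "qqop \<Rightarrow> qqop \<Rightarrow> real" where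
  "CP \<rho> H = Sup (energies \<rho> H) - Inf (energies \<rho> H)"

definition CP1 :: "qqop \<Rightarrow> real" where
  "CP1 H = Sup {CP \<rho> H | \<rho>. separable \<rho>}"

definition real_eigenvalues :: "complex^'n^'n \<Rightarrow> real set" where
  "real_eigenvalues H = {l. \<exists>v. v \<noteq> 0 \<and> H *v v = l *\<^sub>R v}"

definition spec_spread :: "complex^'n^'n \<Rightarrow> real" where
  "spec_spread H = Max (real_eigenvalues H) - Min (real_eigenvalues H)"

definition H_Ant :: "real \<Rightarrow> qqop" where
  "H_Ant \<omega> = \<omega> *\<^sub>R (kron sigma1 sigma1 + kron sigma2 sigma2 + kron sigma3 sigma3)"

definition ket :: "2 \<Rightarrow> 2 \<Rightarrow> qqvec" where
  "ket a b = (\<chi> x. if x = (a,b) then 1 else 0)"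

definition bell_states :: "qqvec set" where
  "bell_states = {(1 / sqrt 2) *\<^sub>R (ket 0 0 + ket 1 1), (1 / sqrt 2) *\<^sub>R (ket 0 0 - ket 1 1),
                  (1 / sqrt 2) *\<^sub>R (ket 0 1 + ket 1 0), (1 / sqrt 2) *\<^sub>R (ket 0 1 - ket 1 0)}"

definition proj :: "complex^'n \<Rightarrow> complex^'n^'n" where
  "proj v = (\<chi> i j. v$i * cnj (v$j))"

definition werner :: "real \<Rightarrow> qqvec \<Rightarrow> qqop" where
  "werner p \<psi> = ((1 - p) / 4) *\<^sub>R mat 1 + p *\<^sub>R proj \<psi>"

end

theory Submission
  imports Defs
begin


lemma tr_mult_expand: "tr (A ** B) = (\<Sum>i\<in>UNIV. \<Sum>j\<in>UNIV. A$i$j * B$j$i)"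
  unfolding tr_def matrix_matrix_mult_def by simp

lemma tr_mult_comm: "tr (A ** B) = tr (B ** (A::complex^'n^'n))"
  unfolding tr_mult_expand by (subst sum.swap) (simp add: mult.commute)

lemma adj_mult: "adj (A ** B) = adj B ** adj (A::complex^'n^'n)"
  unfolding adj_def matrix_matrix_mult_def by (simp add: vec_eq_iff mult.commute)

lemma adj_adj[simp]: "adj (adj A) = A"
  unfolding adj_def by (simp add: vec_eq_iff)

lemma adj_mat1[simp]: "adj (mat 1) = mat 1"
  unfolding adj_def by (simp add: vec_eq_iff mat_def)

lemma kron_mult: "kron A B ** kron C D = kron (A ** C) (B ** D)"
  unfolding kron_def matrix_matrix_mult_def
  by (simp add: vec_eq_iff sum_product UNIV_Times_UNIV[symmetric] sum.cartesian_product del: UNIV_Times_UNIV)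
     (simp add: algebra_simps case_prod_unfold)

lemma adj_kron: "adj (kron A B) = kron (adj A) (adj B)"
  unfolding adj_def kron_def by (simp add: vec_eq_iff)

lemma kron_mat1: "kron (mat 1) (mat 1) = mat 1"
  unfolding kron_def by (simp add: vec_eq_iff mat_def prod_eq_iff)

lemma unitary_kron: "unitary A \<Longrightarrow> unitary B \<Longrightarrow> unitary (kron A B)"
  unfolding unitary_def by (simp add: adj_kron kron_mult kron_mat1)

lemma unitary_adj: "unitary U \<Longrightarrow> unitary (adj U)"
  unfolding unitary_def by simp

definition qf :: "complex^'n^'n \<Rightarrow> complex^'n \<Rightarrow> complex" where
  "qf \<rho> v = (\<Sum>i\<in>UNIV. cnj (v$i) * (\<rho> *v v)$i)"

lemma inner_adj: "(\<Sum>i\<in>UNIV. cnj (v$i) * (U *v w)$i) = (\<Sum>j\<in>UNIV. cnj ((adj U *v v)$j) * w$j)"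
  unfolding matrix_vector_mult_def adj_def
  by (simp add: sum_distrib_left sum_distrib_right algebra_simps) (subst sum.swap, simp)

lemma qf_conj: "qf (U ** \<rho> ** adj U) v = qf \<rho> (adj U *v v)"
  unfolding qf_def
  by (simp add: matrix_vector_mul_assoc[symmetric] inner_adj)

lemma tr_conj: "unitary U \<Longrightarrow> tr (U ** \<rho> ** adj U) = tr \<rho>"
  unfolding unitary_def
  by (metis matrix_mul_assoc matrix_mul_lid tr_mult_comm)

lemma density_conj: "unitary U \<Longrightarrow> density_op \<rho> \<Longrightarrow> density_op (U ** \<rho> ** adj U)"
  unfolding density_op_def
  by (auto simp: tr_conj adj_mult matrix_mul_assoc qf_conj[unfolded qf_def])

lemma energy_alt: "energy \<rho> H Ua Ub = Re (tr (\<rho> ** (adj (kron Ua Ub) ** H ** kron Ua Ub)))"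
  unfolding energy_def
  by (metis matrix_mul_assoc tr_mult_comm)


lemma UNIV2': "(UNIV::2 set) = {0,1}" using UNIV_2 by auto
lemma ne01[simp]: "(0::2) \<noteq> 1" "(1::2) \<noteq> 0" by auto
lemma sum22: "(\<Sum>x\<in>(UNIV::(2\<times>2) set). f x) = f (0,0) + f (0,1) + f (1,0) + f (1,1)"
  by (simp add: UNIV_Times_UNIV[symmetric] sum.cartesian_product[symmetric] UNIV2' algebra_simps del: UNIV_Times_UNIV)
lemma sum2': "(\<Sum>x\<in>(UNIV::2 set). f x) = f 0 + f 1"
  by (simp add: UNIV2')
lemma all2: "(\<forall>x::2. P x) \<longleftrightarrow> P 0 \<and> P 1"
  by (metis UNIV2' UNIV_I insertE singletonD)
lemma all22: "(\<forall>x::2\<times>2. P x) \<longleftrightarrow> P (0,0) \<and> P (0,1) \<and> P (1,0) \<and> P (1,1)"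
  by (auto simp: all2)
lemma two_cases: "(x::2) = 0 \<or> x = 1" using UNIV2' by auto
lemma scaleR_entry: "((r::real) *\<^sub>R (M::complex^'n^'m)) $ i $ j = complex_of_real r * M$i$j"
  by (simp only: vector_scaleR_component) (simp add: scaleR_conv_of_real)
lemma H_entries: "H_Ant w $ (a,b) $ (c,d) = w * (if a=c \<and> b = d then (if a = b then 1 else -1) else if a = d \<and> b = c then 2 else 0)"
  using two_cases[of a] two_cases[of b] two_cases[of c] two_cases[of d]
  unfolding H_Ant_def kron_def sigma1_def sigma2_def sigma3_def
  by (elim disjE) (simp_all only: scaleR_entry, simp_all)

definition sv :: qqvec where "sv = ket 0 1 - ket 1 0"
definition tv :: qqvec where "tv = ket 0 1 + ket 1 0"

lemma trH_id: "Re (tr (\<rho> ** H_Ant w)) = w * (Re (tr \<rho>) - 2 * Re (qf \<rho> sv))"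
  unfolding tr_mult_expand unfolding tr_def qf_def matrix_vector_mult_def sv_def ket_def
  by (simp add: sum22 sum2' H_entries algebra_simps)

lemma tr_id: "tr \<rho> = qf \<rho> (ket 0 0) + qf \<rho> (ket 1 1) + (qf \<rho> tv + qf \<rho> sv) / 2"
  unfolding tr_def qf_def matrix_vector_mult_def sv_def tv_def ket_def
  by (simp add: sum22 sum2' algebra_simps)

lemma density_bound:
  assumes "density_op \<rho>" "w > 0"
  shows "-3*w \<le> Re (tr (\<rho> ** H_Ant w)) \<and> Re (tr (\<rho> ** H_Ant w)) \<le> w"
proof -
  have psd: "\<And>v. 0 \<le> Re (qf \<rho> v)" and t: "tr \<rho> = 1" using assms unfolding density_op_def qf_def by auto
  have "2 * Re (tr \<rho>) = 2 * Re (qf \<rho> (ket 0 0)) + 2 * Re (qf \<rho> (ket 1 1)) + Re (qf \<rho> tv) + Re (qf \<rho> sv)"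
    by (subst tr_id) (simp add: field_simps)
  then have "Re (qf \<rho> sv) \<le> 2" using psd[of "ket 0 0"] psd[of "ket 1 1"] psd[of tv] t by simp
  moreover have "0 \<le> Re (qf \<rho> sv)" using psd by simp
  ultimately have "w * (-3) \<le> w * (1 - 2 * Re (qf \<rho> sv))" "w * (1 - 2 * Re (qf \<rho> sv)) \<le> w * 1"
    using assms(2) by (intro mult_left_mono; simp)+
  then show ?thesis using t unfolding trH_id by simp
qed


lemma herm_entries: "adj a = a \<Longrightarrow> a$i$j = cnj (a$j$i)"
  unfolding adj_def vec_eq_iff by (metis complex_cnj_cnj vec_lambda_beta)

lemma bloch:
  fixes a :: qop
  assumes "density_op a"
  shows "Im (a$0$0) = 0 \<and> Im (a$1$1) = 0 \<and> a$1$0 = cnj (a$0$1) \<and> Re (a$0$0) + Re (a$1$1) = 1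
     \<and> (Re (a$0$1))^2 + (Im (a$0$1))^2 \<le> Re (a$0$0) * Re (a$1$1)"
proof -
  have h: "adj a = a" and psd: "\<And>v. 0 \<le> Re (\<Sum>i\<in>UNIV. cnj (v$i) * (a *v v)$i)" and t: "tr a = 1"
    using assms unfolding density_op_def by auto
  have i0: "Im (a$0$0) = 0" using herm_entries[OF h, of 0 0] by (metis cnj.simps(2) neg_equal_zero)
  have i1: "Im (a$1$1) = 0" using herm_entries[OF h, of 1 1] by (metis cnj.simps(2) neg_equal_zero)
  have c: "a$1$0 = cnj (a$0$1)" using herm_entries[OF h, of 1 0] by simp
  have s: "Re (a$0$0) + Re (a$1$1) = 1" using t unfolding tr_def sum2' by (metis one_complex.simps(1) plus_complex.simps(1))
  define z where "z = a$0$1"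
  define x where "x = Re (a$0$0)"
  define y where "y = Re (a$1$1)"
  have a00: "a$0$0 = complex_of_real x" using i0 x_def by (simp add: complex_eq_iff)
  have a11: "a$1$1 = complex_of_real y" using i1 y_def by (simp add: complex_eq_iff)
  have a10: "a$1$0 = cnj z" using c z_def by simp
  define v1 :: "complex^2" where "v1 = (\<chi> i. if i = 0 then - z else of_real x)"
  define v2 :: "complex^2" where "v2 = (\<chi> i. if i = 0 then of_real y else - cnj z)"
  have "Re (\<Sum>i\<in>UNIV. cnj (v1$i) * (a *v v1)$i) + Re (\<Sum>i\<in>UNIV. cnj (v2$i) * (a *v v2)$i)
     = (x + y) * (x * y - ((Re z)^2 + (Im z)^2))"
    unfolding matrix_vector_mult_def sum2' v1_def v2_def
    by (simp add: a00 a11 a10 z_def[symmetric] power2_eq_square algebra_simps)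
  then have "(Re z)^2 + (Im z)^2 \<le> x * y" using psd[of v1] psd[of v2] s x_def y_def by simp
  then show ?thesis using i0 i1 c s x_def y_def z_def by simp
qed
lemma prod_bound:
  fixes a b :: qop
  assumes da: "density_op a" and db: "density_op b" and w: "w > 0"
  shows "- w \<le> Re (tr (kron a b ** H_Ant w)) \<and> Re (tr (kron a b ** H_Ant w)) \<le> w"
proof -
  note A = bloch[OF da] and B = bloch[OF db]
  define z where "z = a$0$1"
  define x where "x = Re (a$0$0)"
  define u where "u = b$0$1"
  define y where "y = Re (b$0$0)"
  have a00: "a$0$0 = complex_of_real x" using A x_def by (simp add: complex_eq_iff)
  have a11: "a$1$1 = complex_of_real (1 - x)" using A x_def by (simp add: complex_eq_iff)
  have a10: "a$1$0 = cnj z" using A z_def by simp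
  have b00: "b$0$0 = complex_of_real y" using B y_def by (simp add: complex_eq_iff)
  have b11: "b$1$1 = complex_of_real (1 - y)" using B y_def by (simp add: complex_eq_iff)
  have b10: "b$1$0 = cnj u" using B u_def by simp
  have e: "Re (tr (kron a b ** H_Ant w)) = w * ((2*x-1)*(2*y-1) + 4*(Re z * Re u + Im z * Im u))"
    unfolding tr_mult_expand unfolding kron_def sum22
    by (simp add: H_entries a00 a11 a10 b00 b11 b10 z_def[symmetric] u_def[symmetric] algebra_simps)
  have hz: "(Re z)^2 + (Im z)^2 \<le> x * (1 - x)" using A x_def z_def by (metis add_diff_cancel_left')
  have hu: "(Re u)^2 + (Im u)^2 \<le> y * (1 - y)" using B y_def u_def by (metis add_diff_cancel_left')
  have "\<bar>(2*x-1)*(2*y-1) + 4*(Re z * Re u + Im z * Im u)\<bar> \<le> 1"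
  proof -
    have s1: "(2*x-1)^2 + 4*((Re z)^2 + (Im z)^2) \<le> 1" using hz by (simp add: power2_eq_square algebra_simps)
    have s2: "(2*y-1)^2 + 4*((Re u)^2 + (Im u)^2) \<le> 1" using hu by (simp add: power2_eq_square algebra_simps)
    have p1: "0 \<le> ((2*x-1) - (2*y-1))^2 + (2*Re z - 2*Re u)^2 + (2*Im z - 2*Im u)^2" by simp
    have p2: "0 \<le> ((2*x-1) + (2*y-1))^2 + (2*Re z + 2*Re u)^2 + (2*Im z + 2*Im u)^2" by simp
    show ?thesis using s1 s2 p1 p2 unfolding abs_le_iff by (simp add: power2_eq_square algebra_simps) 
  qed
  then have "w * ((2*x-1)*(2*y-1) + 4*(Re z * Re u + Im z * Im u)) \<le> w * 1"
     "w * (-1) \<le> w * ((2*x-1)*(2*y-1) + 4*(Re z * Re u + Im z * Im u))"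
    using w unfolding abs_le_iff by (intro mult_left_mono; linarith)+
  then show ?thesis unfolding e by simp
qed




lemma tr_add_lin: "tr ((A + B) ** K) = tr (A ** K) + tr (B ** (K::complex^'n^'n))"
  unfolding tr_mult_expand by (simp add: distrib_right sum.distrib)

lemma tr_scale_lin: "tr ((c *\<^sub>R A) ** K) = of_real c * tr (A ** (K::complex^'n^'n))"
  unfolding tr_mult_expand by (simp add: sum_distrib_left, simp add: scaleR_conv_of_real mult.assoc)

lemma tr_sum_lin: "tr ((\<Sum>k<(n::nat). q k *\<^sub>R M k) ** K) = (\<Sum>k<n. of_real (q k) * tr (M k ** (K::complex^'n^'n)))"
proof (induction n)
  case 0 then show ?case unfolding tr_mult_expand by simp
next
  case (Suc n) then show ?case by (simp add: tr_add_lin tr_scale_lin)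
qed

lemma energy_dens:
  assumes "unitary Ua" "unitary Ub" "density_op \<rho>" "w > 0"
  shows "-3*w \<le> energy \<rho> (H_Ant w) Ua Ub \<and> energy \<rho> (H_Ant w) Ua Ub \<le> w"
  unfolding energy_def
  by (rule density_bound[OF density_conj[OF unitary_kron[OF assms(1,2)] assms(3)] assms(4)])

lemma energy_prod:
  assumes "unitary Ua" "unitary Ub" "density_op a" "density_op b" "w > 0"
  shows "-w \<le> energy (kron a b) (H_Ant w) Ua Ub \<and> energy (kron a b) (H_Ant w) Ua Ub \<le> w"
proof -
  have "kron Ua Ub ** kron a b ** adj (kron Ua Ub) = kron (Ua ** a ** adj Ua) (Ub ** b ** adj Ub)"
    by (simp add: adj_kron kron_mult)
  then show ?thesis unfolding energy_def
    using prod_bound[OF density_conj[OF assms(1,3)] density_conj[OF assms(2,4)] assms(5)] by simp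
qed


lemma energy_sep:
  assumes "unitary Ua" "unitary Ub" "separable \<rho>" "w > 0"
  shows "-w \<le> energy \<rho> (H_Ant w) Ua Ub \<and> energy \<rho> (H_Ant w) Ua Ub \<le> w"
proof -
  obtain n :: nat and q ra rb where h: "\<forall>k<n. 0 \<le> q k \<and> density_op (ra k) \<and> density_op (rb k)"
     and s: "(\<Sum>k<n. q k) = 1" and r: "\<rho> = (\<Sum>k<n. q k *\<^sub>R kron (ra k) (rb k))"
    using assms(3) unfolding separable_def by blast
  define K where "K = adj (kron Ua Ub) ** H_Ant w ** kron Ua Ub"
  define E where "E k = energy (kron (ra k) (rb k)) (H_Ant w) Ua Ub" for k
  have EK: "E k = Re (tr (kron (ra k) (rb k) ** K))" for k
    unfolding E_def K_def by (rule energy_alt)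
  have "energy \<rho> (H_Ant w) Ua Ub = Re (tr (\<rho> ** K))" unfolding K_def by (rule energy_alt)
  also have "\<dots> = Re (\<Sum>k<n. of_real (q k) * tr (kron (ra k) (rb k) ** K))" by (simp only: r tr_sum_lin)
  also have "\<dots> = (\<Sum>k<n. q k * E k)" by (simp add: Re_sum EK)
  finally have e: "energy \<rho> (H_Ant w) Ua Ub = (\<Sum>k<n. q k * E k)" .
  have b: "q k * (-w) \<le> q k * E k \<and> q k * E k \<le> q k * w" if "k \<in> {..<n}" for k
  proof -
    have "0 \<le> q k" "density_op (ra k)" "density_op (rb k)" using h that by auto
    moreover have "-w \<le> E k \<and> E k \<le> w" unfolding E_def
      using energy_prod[OF assms(1,2) calculation(2,3) assms(4)] .
    ultimately show ?thesis using mult_left_mono[of "-w" "E k" "q k"] mult_left_mono[of "E k" w "q k"] by simp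
  qed
  have "(\<Sum>k<n. q k * E k) \<le> (\<Sum>k<n. q k * w)" using b by (intro sum_mono) auto
  moreover have "(\<Sum>k<n. q k * (-w)) \<le> (\<Sum>k<n. q k * E k)" using b by (intro sum_mono) auto
  moreover have "(\<Sum>k<n. q k * w) = w" "(\<Sum>k<n. q k * (-w)) = -w"
    using s by (simp_all add: sum_distrib_right[symmetric] sum_negf)
  ultimately show ?thesis unfolding e by simp
qed

lemma trH0: "tr (H_Ant w) = 0"
  unfolding tr_def by (simp add: sum22 H_entries)

lemma energy_werner:
  assumes "unitary Ua" "unitary Ub"
  shows "energy (werner p \<psi>) (H_Ant w) Ua Ub = p * energy (proj \<psi>) (H_Ant w) Ua Ub"
proof -
  have U: "unitary (kron Ua Ub)" using unitary_kron assms by blast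
  have "tr (mat 1 ** (adj (kron Ua Ub) ** H_Ant w ** kron Ua Ub)) = tr (H_Ant w)"
    using U unfolding unitary_def by (metis matrix_mul_assoc matrix_mul_lid tr_mult_comm)
  then show ?thesis unfolding energy_alt werner_def tr_add_lin tr_scale_lin by (simp add: trH0)
qed


lemma mv_scaleR: "(A::complex^'n^'m) *v (c *\<^sub>R x) = c *\<^sub>R (A *v x)"
  unfolding matrix_vector_mult_def by (simp add: vec_eq_iff scaleR_sum_right)

lemma proj_conj: "U ** proj v ** adj U = proj (U *v v)"
  unfolding proj_def adj_def matrix_matrix_mult_def matrix_vector_mult_def
  by (simp add: vec_eq_iff sum_distrib_left sum_distrib_right cnj_sum algebra_simps)

lemma cscale: "c *\<^sub>R (x::complex) = complex_of_real c * x"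
  by (simp add: scaleR_conv_of_real)

lemma proj_scale: "proj (c *\<^sub>R v) = (c^2) *\<^sub>R proj v"
  unfolding proj_def by (simp add: vec_eq_iff cscale power2_eq_square algebra_simps)

lemma density_proj: "(\<Sum>i\<in>UNIV. v$i * cnj (v$i)) = 1 \<Longrightarrow> density_op (proj v)"
proof -
  assume n: "(\<Sum>i\<in>UNIV. v$i * cnj (v$i)) = 1"
  have "adj (proj v) = proj v" unfolding adj_def proj_def by (simp add: vec_eq_iff mult.commute)
  moreover have "0 \<le> Re (\<Sum>i\<in>UNIV. cnj (u$i) * (proj v *v u)$i)" for u
  proof -
    define S where "S = (\<Sum>j\<in>UNIV. cnj (v$j) * u$j)"
    have "(\<Sum>i\<in>UNIV. cnj (u$i) * (proj v *v u)$i) = cnj S * S"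
      unfolding S_def proj_def matrix_vector_mult_def
      by (simp add: sum_distrib_left sum_distrib_right cnj_sum algebra_simps)
    moreover have "Re (cnj S * S) = (Re S)^2 + (Im S)^2" by (simp add: power2_eq_square)
    ultimately show ?thesis by simp
  qed
  moreover have "tr (proj v) = 1" using n unfolding tr_def proj_def by simp
  ultimately show ?thesis unfolding density_op_def by blast
qed



definition J :: qop where "J = (\<chi> i j. if i = 0 \<and> j = 1 then 1 else if i = 1 \<and> j = 0 then -1 else 0)"

lemma unit_concrete: "unitary (mat 1 :: qop)" "unitary sigma1" "unitary sigma3" "unitary J"
  unfolding unitary_def adj_def matrix_matrix_mult_def mat_def sigma1_def sigma3_def J_def
  by (simp_all add: vec_eq_iff all2 sum2')

lemma val_gen: "Re (tr (proj (kron (mat 1) U *v v) ** H_Ant w)) =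
   Re (\<Sum>i\<in>UNIV. \<Sum>j\<in>UNIV. (kron (mat 1) U *v v)$i * cnj ((kron (mat 1) U *v v)$j) * H_Ant w $ j $ i)"
  unfolding tr_mult_expand proj_def by simp

lemma
  shows v1: "Re (tr (proj (kron (mat 1) (mat 1) *v (ket 0 0 + ket 1 1)) ** H_Ant w)) = 2 * w"
  and v2: "Re (tr (proj (kron (mat 1) J *v (ket 0 0 + ket 1 1)) ** H_Ant w)) = -6 * w"
  and v3: "Re (tr (proj (kron (mat 1) (mat 1) *v (ket 0 0 - ket 1 1)) ** H_Ant w)) = 2 * w"
  and v4: "Re (tr (proj (kron (mat 1) sigma1 *v (ket 0 0 - ket 1 1)) ** H_Ant w)) = -6 * w"
  and v5: "Re (tr (proj (kron (mat 1) (mat 1) *v (ket 0 1 + ket 1 0)) ** H_Ant w)) = 2 * w"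
  and v6: "Re (tr (proj (kron (mat 1) sigma3 *v (ket 0 1 + ket 1 0)) ** H_Ant w)) = -6 * w"
  and v7: "Re (tr (proj (kron (mat 1) sigma3 *v (ket 0 1 - ket 1 0)) ** H_Ant w)) = 2 * w"
  and v8: "Re (tr (proj (kron (mat 1) (mat 1) *v (ket 0 1 - ket 1 0)) ** H_Ant w)) = -6 * w"
  and v9: "Re (tr (proj (kron (mat 1) (mat 1) *v ket 0 0) ** H_Ant w)) = w"
  and v10: "Re (tr (proj (kron (mat 1) sigma1 *v ket 0 0) ** H_Ant w)) = - w"
  unfolding val_gen unfolding matrix_vector_mult_def kron_def mat_def J_def sigma1_def sigma3_def ket_def
  by (simp_all add: sum22 H_entries)



lemma e_half: "energy (proj ((1/sqrt 2) *\<^sub>R v)) H (mat 1) U = (1/2) * Re (tr (proj (kron (mat 1) U *v v) ** H))"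
  unfolding energy_def proj_conj unfolding mv_scaleR proj_scale tr_scale_lin
  by (simp add: power_divide)

lemma e_plain: "energy (proj v) H (mat 1) U = Re (tr (proj (kron (mat 1) U *v v) ** H))"
  unfolding energy_def proj_conj by simp

lemma bell_norm: "\<psi> \<in> bell_states \<Longrightarrow> (\<Sum>i\<in>UNIV. \<psi>$i * cnj (\<psi>$i)) = 1"
  unfolding bell_states_def ket_def
  by (auto simp: sum22 cscale power_divide simp flip: of_real_mult)

lemma bell_energy:
  assumes "\<psi> \<in> bell_states"
  shows "\<exists>U1 U2. unitary U1 \<and> unitary U2 \<and> energy (proj \<psi>) (H_Ant w) (mat 1) U1 = w
     \<and> energy (proj \<psi>) (H_Ant w) (mat 1) U2 = -3 * w"
  using assms unfolding bell_states_def
proof (elim insertE emptyE)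
  assume "\<psi> = (1 / sqrt 2) *\<^sub>R (ket 0 0 + ket 1 1)"
  then show ?thesis using unit_concrete
    by (intro exI[of _ "mat 1"] exI[of _ J]) (simp add: e_half v1 v2)
next
  assume "\<psi> = (1 / sqrt 2) *\<^sub>R (ket 0 0 - ket 1 1)"
  then show ?thesis using unit_concrete
    by (intro exI[of _ "mat 1"] exI[of _ sigma1]) (simp add: e_half v3 v4)
next
  assume "\<psi> = (1 / sqrt 2) *\<^sub>R (ket 0 1 + ket 1 0)"
  then show ?thesis using unit_concrete
    by (intro exI[of _ "mat 1"] exI[of _ sigma3]) (simp add: e_half v5 v6)
next
  assume "\<psi> = (1 / sqrt 2) *\<^sub>R (ket 0 1 - ket 1 0)"
  then show ?thesis using unit_concrete
    by (intro exI[of _ sigma3] exI[of _ "mat 1"]) (simp add: e_half v7 v8)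
qed



lemma CP_exact:
  assumes "\<forall>x\<in>E. lo \<le> x \<and> x \<le> hi" "hi \<in> E" "lo \<in> E"
  shows "Sup E - Inf E = hi - (lo::real)"
  using assms by (simp add: cSup_eq_maximum cInf_eq_minimum)

lemma CP_upper:
  assumes "\<forall>x\<in>E. lo \<le> x \<and> x \<le> hi" "E \<noteq> {}"
  shows "Sup E - Inf E \<le> hi - (lo::real)"
proof -
  have "Sup E \<le> hi" using assms by (intro cSup_least) auto
  moreover have "lo \<le> Inf E" using assms by (intro cInf_greatest) auto
  ultimately show ?thesis by simp
qed

lemma energies_ne: "energies \<rho> H \<noteq> {}"
  unfolding energies_def using unit_concrete(1) by blast

lemma eig:
  assumes w: "w > 0"
  shows "real_eigenvalues (H_Ant w) = {w, -3*w}"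
proof
  show "real_eigenvalues (H_Ant w) \<subseteq> {w, -3*w}"
  proof
    fix l assume "l \<in> real_eigenvalues (H_Ant w)"
    then obtain v where v0: "v \<noteq> 0" and ev: "H_Ant w *v v = l *\<^sub>R v" unfolding real_eigenvalues_def by blast
    define a where "a = v$(0,0)"
    define b where "b = v$(0,1)"
    define c where "c = v$(1,0)"
    define d where "d = v$(1,1)"
    have comp: "(H_Ant w *v v)$x = (l *\<^sub>R v)$x" for x using ev by simp
    have e1: "of_real w * a = of_real l * a" using comp[of "(0,0)"]
      unfolding matrix_vector_mult_def by (simp add: sum22 H_entries a_def cscale)
    have e4: "of_real w * d = of_real l * d" using comp[of "(1,1)"]
      unfolding matrix_vector_mult_def by (simp add: sum22 H_entries d_def cscale)
    have e2: "- of_real w * b + 2 * of_real w * c = of_real l * b" using comp[of "(0,1)"]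
      unfolding matrix_vector_mult_def by (simp add: sum22 H_entries b_def c_def cscale algebra_simps)
    have e3: "2 * of_real w * b - of_real w * c = of_real l * c" using comp[of "(1,0)"]
      unfolding matrix_vector_mult_def by (simp add: sum22 H_entries b_def c_def cscale algebra_simps)
    have nz: "a \<noteq> 0 \<or> b \<noteq> 0 \<or> c \<noteq> 0 \<or> d \<noteq> 0"
    proof (rule ccontr)
      assume "\<not> (a \<noteq> 0 \<or> b \<noteq> 0 \<or> c \<noteq> 0 \<or> d \<noteq> 0)"
      then have "v = 0" unfolding a_def b_def c_def d_def vec_eq_iff all22 by simp
      then show False using v0 by simp
    qed
    show "l \<in> {w, -3*w}"
    proof (cases "l = w")
      case True then show ?thesis by simp
    next
      case False
      then have lw: "complex_of_real w \<noteq> of_real l" by simp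
      have "a = 0" using e1 lw by simp
      moreover have "d = 0" using e4 lw by simp
      moreover have "of_real w * (b + c) = of_real l * (b + c)"
      proof -
        have "of_real w * (b + c) = (- of_real w * b + 2 * of_real w * c) + (2 * of_real w * b - of_real w * c)"
          by (simp add: algebra_simps)
        also have "\<dots> = of_real l * b + of_real l * c" by (simp only: e2 e3)
        finally show ?thesis by (simp add: algebra_simps)
      qed
      then have "b + c = 0" using lw by (metis mult_cancel_right mult.commute)
      then have bc: "c = - b" by (simp add: add_eq_0_iff)
      ultimately have "b \<noteq> 0" using nz by auto
      moreover have "of_real (-3 * w) * b = of_real l * b"
      proof -
        have "- of_real w * b + 2 * of_real w * (- b) = of_real l * b" using e2 by (simp only: bc)
        moreover have "of_real (-3 * w) * b = - of_real w * b + 2 * of_real w * (- b)" by (simp add: algebra_simps)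
        ultimately show ?thesis by simp
      qed
      ultimately have "complex_of_real (-3*w) = of_real l" by (metis mult_cancel_right)
      then show ?thesis by (simp only: of_real_eq_iff) simp
    qed
  qed
next
  have "H_Ant w *v ket 0 0 = w *\<^sub>R ket 0 0"
    unfolding matrix_vector_mult_def ket_def by (simp add: vec_eq_iff all22 sum22 H_entries cscale)
  moreover have "H_Ant w *v sv = (-3*w) *\<^sub>R sv"
    unfolding matrix_vector_mult_def sv_def ket_def by (simp add: vec_eq_iff all22 sum22 H_entries cscale)
  moreover have "ket 0 0 \<noteq> 0" "sv \<noteq> 0" unfolding sv_def ket_def by (auto simp: vec_eq_iff)
  ultimately show "{w, -3*w} \<subseteq> real_eigenvalues (H_Ant w)" unfolding real_eigenvalues_def by blast
qed

lemma spread: "w > 0 \<Longrightarrow> spec_spread (H_Ant w) = 4 * w"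
  unfolding spec_spread_def by (simp add: eig)



lemma CP_werner:
  assumes w: "w > 0" and p: "0 \<le> p" and \<psi>: "\<psi> \<in> bell_states"
  shows "CP (werner p \<psi>) (H_Ant w) = 4 * p * w"
proof -
  have dp: "density_op (proj \<psi>)" using density_proj bell_norm \<psi> by blast
  have bnd: "\<forall>x\<in>energies (werner p \<psi>) (H_Ant w). p * (-3*w) \<le> x \<and> x \<le> p * w"
  proof
    fix x assume "x \<in> energies (werner p \<psi>) (H_Ant w)"
    then obtain Ua Ub where u: "unitary Ua" "unitary Ub" and x: "x = energy (werner p \<psi>) (H_Ant w) Ua Ub"
      unfolding energies_def by blast
    have "-3*w \<le> energy (proj \<psi>) (H_Ant w) Ua Ub \<and> energy (proj \<psi>) (H_Ant w) Ua Ub \<le> w"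
      using energy_dens[OF u dp w] by simp
    then show "p * (-3*w) \<le> x \<and> x \<le> p * w" unfolding x energy_werner[OF u]
      using p mult_left_mono[of "-3*w" "energy (proj \<psi>) (H_Ant w) Ua Ub" p]
        mult_left_mono[of "energy (proj \<psi>) (H_Ant w) Ua Ub" w p] by simp
  qed
  obtain U1 U2 where U: "unitary U1" "unitary U2" "energy (proj \<psi>) (H_Ant w) (mat 1) U1 = w"
     "energy (proj \<psi>) (H_Ant w) (mat 1) U2 = -3 * w" using bell_energy[OF \<psi>] by blast
  have "p * w \<in> energies (werner p \<psi>) (H_Ant w)" "p * (-3*w) \<in> energies (werner p \<psi>) (H_Ant w)"
    unfolding energies_def using U unit_concrete(1) energy_werner[OF unit_concrete(1)]
    by (metis (mono_tags, lifting) mem_Collect_eq)+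
  then show ?thesis unfolding CP_def using CP_exact[OF bnd] by (simp add: algebra_simps)
qed

lemma CP_dens_le:
  assumes w: "w > 0" and d: "density_op \<rho>"
  shows "CP \<rho> (H_Ant w) \<le> 4 * w"
proof -
  have "\<forall>x\<in>energies \<rho> (H_Ant w). -3*w \<le> x \<and> x \<le> w"
    unfolding energies_def using energy_dens[OF _ _ d w] by blast
  then show ?thesis unfolding CP_def using CP_upper[OF _ energies_ne] by fastforce
qed

lemma CP_sep_le:
  assumes w: "w > 0" and d: "separable \<rho>"
  shows "CP \<rho> (H_Ant w) \<le> 2 * w"
proof -
  have "\<forall>x\<in>energies \<rho> (H_Ant w). -w \<le> x \<and> x \<le> w"
    unfolding energies_def using energy_sep[OF _ _ d w] by blast
  then show ?thesis unfolding CP_def using CP_upper[OF _ energies_ne] by fastforce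
qed

definition P0 :: qop where "P0 = proj (\<chi> i. if i = 0 then 1 else 0)"

lemma sep0: "separable (proj (ket 0 0))"
proof -
  have dP: "density_op P0" unfolding P0_def by (rule density_proj) (simp add: sum2')
  have "proj (ket 0 0) = kron P0 P0"
    unfolding P0_def proj_def kron_def ket_def by (simp add: vec_eq_iff all22 all2)
  then show ?thesis unfolding separable_def
    by (intro exI[of _ "1::nat"] exI[of _ "\<lambda>_. 1"] exI[of _ "\<lambda>_. P0"]) (simp add: dP)
qed

lemma CP_sep0:
  assumes w: "w > 0"
  shows "CP (proj (ket 0 0)) (H_Ant w) = 2 * w"
proof -
  have bnd: "\<forall>x\<in>energies (proj (ket 0 0)) (H_Ant w). -w \<le> x \<and> x \<le> w"
    unfolding energies_def using energy_sep[OF _ _ sep0 w] by blast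
  have "w \<in> energies (proj (ket 0 0)) (H_Ant w)" "-w \<in> energies (proj (ket 0 0)) (H_Ant w)"
    unfolding energies_def using unit_concrete e_plain v9 v10 by (metis (mono_tags, lifting) mem_Collect_eq)+
  then show ?thesis unfolding CP_def using CP_exact[OF bnd] by simp
qed

theorem mainTheorem4:
  fixes \<omega> p :: real and \<psi> :: qqvec
  assumes "\<omega> > 0" and "0 \<le> p" and "p \<le> 1" and "\<psi> \<in> bell_states"
  shows "CP1 (H_Ant \<omega>) = 2 * \<omega>
    \<and> Sup {CP \<rho> (H_Ant \<omega>) | \<rho>. density_op \<rho>} = spec_spread (H_Ant \<omega>)
    \<and> spec_spread (H_Ant \<omega>) = 4 * \<omega>
    \<and> CP (werner p \<psi>) (H_Ant \<omega>) = 4 * p * \<omega>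
    \<and> (CP (werner p \<psi>) (H_Ant \<omega>) > CP1 (H_Ant \<omega>) \<longleftrightarrow> p > 1/2)"
proof -
  have m1: "2 * \<omega> \<in> {CP \<rho> (H_Ant \<omega>) | \<rho>. separable \<rho>}"
    using sep0 CP_sep0[OF assms(1), symmetric] by blast
  have u1: "\<And>x. x \<in> {CP \<rho> (H_Ant \<omega>) | \<rho>. separable \<rho>} \<Longrightarrow> x \<le> 2 * \<omega>"
    using CP_sep_le[OF assms(1)] by blast
  have c1: "CP1 (H_Ant \<omega>) = 2 * \<omega>"
    unfolding CP1_def by (rule cSup_eq_maximum[OF m1 u1])
  define \<psi>0 where "\<psi>0 = (1 / sqrt 2) *\<^sub>R (ket 0 0 + ket 1 1)"
  have b0: "\<psi>0 \<in> bell_states" unfolding \<psi>0_def bell_states_def by simp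
  have w1: "werner 1 \<psi>0 = proj \<psi>0" unfolding werner_def by simp
  have dw: "density_op (werner 1 \<psi>0)" unfolding w1 using density_proj bell_norm b0 by blast
  have m2: "4 * \<omega> \<in> {CP \<rho> (H_Ant \<omega>) | \<rho>. density_op \<rho>}"
  proof -
    have "CP (werner 1 \<psi>0) (H_Ant \<omega>) = 4 * \<omega>" using CP_werner[OF assms(1) _ b0, of 1] by simp
    then show ?thesis using dw by (metis (mono_tags, lifting) mem_Collect_eq)
  qed
  have u2: "\<And>x. x \<in> {CP \<rho> (H_Ant \<omega>) | \<rho>. density_op \<rho>} \<Longrightarrow> x \<le> 4 * \<omega>"
    using CP_dens_le[OF assms(1)] by blast
  have c2: "Sup {CP \<rho> (H_Ant \<omega>) | \<rho>. density_op \<rho>} = 4 * \<omega>"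
    by (rule cSup_eq_maximum[OF m2 u2])
  have c3: "spec_spread (H_Ant \<omega>) = 4 * \<omega>" using spread assms(1) by blast
  have c4: "CP (werner p \<psi>) (H_Ant \<omega>) = 4 * p * \<omega>" using CP_werner assms by blast
  have c5: "4 * p * \<omega> > 2 * \<omega> \<longleftrightarrow> p > 1/2" using assms(1) by auto
  show ?thesis using c1 c2 c3 c4 c5 by simp
qed


end
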